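(* Fix $\varepsilon>0$. Let $G^p_n$ be drawn from $G(n,n,p)$ with $p=\omega(n^{-1/2}\log^{1/2} n)$, and let $i_t(G^p_n)$ denote the number of independent sets of size $t$ in $G^p_n$. Then with probability tending to $1$ as $n\to\infty$, the sequence $(i_t(G^p_n))_{t=[\varepsilon n]}^{n}$ is unimodal with mode $n/2$, and moreover is log-concave.
   Context: $G(n,n,p)$ is the probability distribution on bipartite graphs with a fixed bipartition $\mathcal{E}\cup\mathcal{O}$, $|\mathcal{E}|=|\mathcal{O}|=n$, in which each of the $n^2$ pairs in $\mathcal{E}\times\mathcal{O}$ is an edge independently with probability $p=p(n)$. $p=\omega(f(n))$ means $p/f(n)\to\infty$. A sequence $(a_t)_{t=m}^{n}$ is unimodal with mode $k$ if $a_m\le\dots\le a_k\ge\dots\ge a_n$; it is log-concave if $a_k^2\ge a_{k-1}a_{k+1}$ for all $m<k<n$. $[y]$ denotes the integer part of $y$. *)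

theory Defs
  imports "HOL-Probability.Probability"
begin

text \<open>Bipartite graphs on the fixed bipartition E \<union> O, with E = Inl ` {..<n} and
  O = Inr ` {..<n}.  A graph is given by its edge set, a subset of {..<n} \<times> {..<n}:
  the pair (i,j) stands for the edge between Inl i \<in> E and Inr j \<in> O.\<close>

definition bip_vertices :: "nat \<Rightarrow> (nat + nat) set" where
  "bip_vertices n = Inl ` {..<n} \<union> Inr ` {..<n}"

definition Gnnp :: "nat \<Rightarrow> real \<Rightarrow> (nat \<times> nat) set pmf" where
  "Gnnp n p = map_pmf (\<lambda>f. {e \<in> {..<n} \<times> {..<n}. f e})
     (Pi_pmf ({..<n} \<times> {..<n}) False (\<lambda>_. bernoulli_pmf p))"

definition indep_set :: "nat \<Rightarrow> (nat \<times> nat) set \<Rightarrow> (nat + nat) set \<Rightarrow> bool" where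
  "indep_set n Eg S \<longleftrightarrow> S \<subseteq> bip_vertices n \<and>
     (\<forall>i j. Inl i \<in> S \<and> Inr j \<in> S \<longrightarrow> (i, j) \<notin> Eg)"

definition num_indep :: "nat \<Rightarrow> (nat \<times> nat) set \<Rightarrow> nat \<Rightarrow> nat" where
  "num_indep n Eg t = card {S. indep_set n Eg S \<and> card S = t}"

text \<open>(a_t) for t = m..N is nondecreasing up to index k1 and nonincreasing from index k2
  (mode n/2 is rendered with k1 = n div 2, k2 = (n+1) div 2).\<close>
definition unimodal_range :: "nat \<Rightarrow> nat \<Rightarrow> nat \<Rightarrow> nat \<Rightarrow> (nat \<Rightarrow> real) \<Rightarrow> bool" where
  "unimodal_range m N k1 k2 a \<longleftrightarrow>
     (\<forall>t. m \<le> t \<and> t < k1 \<and> t < N \<longrightarrow> a t \<le> a (Suc t)) \<and>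
     (\<forall>t. m \<le> t \<and> k2 \<le> t \<and> t < N \<longrightarrow> a (Suc t) \<le> a t)"

definition log_concave_range :: "nat \<Rightarrow> nat \<Rightarrow> (nat \<Rightarrow> real) \<Rightarrow> bool" where
  "log_concave_range m N a \<longleftrightarrow> (\<forall>k. m < k \<and> k < N \<longrightarrow> a (k - 1) * a (k + 1) \<le> (a k)\<^sup>2)"

end

theory Submission
  imports Defs "HOL-Real_Asymp.Real_Asymp"
begin

lemma prob_rect:
  assumes A: "A \<subseteq> {..<n}" and B: "B \<subseteq> {..<n}" and p: "0 \<le> p" "p \<le> 1"
  shows "measure_pmf.prob (Gnnp n p) {Eg. \<forall>i\<in>A. \<forall>j\<in>B. (i,j) \<notin> Eg} = (1 - p) ^ (card A * card B)"
proof -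
  define G where "G = {..<n} \<times> {..<(n::nat)}"
  define Bs where "Bs = (\<lambda>e. if e \<in> A \<times> B then {False} else (UNIV::bool set))"
  have fin: "finite G" unfolding G_def by simp
  have pre: "(\<lambda>f. {e \<in> {..<n} \<times> {..<n}. f e}) -` {Eg. \<forall>i\<in>A. \<forall>j\<in>B. (i,j) \<notin> Eg} = Pi G Bs"
    using A B by (auto simp: G_def Bs_def Pi_def)
  have "measure_pmf.prob (Gnnp n p) {Eg. \<forall>i\<in>A. \<forall>j\<in>B. (i,j) \<notin> Eg}
      = measure_pmf.prob (Pi_pmf G False (\<lambda>_. bernoulli_pmf p)) (Pi G Bs)"
    unfolding Gnnp_def measure_map_pmf pre G_def ..
  also have "\<dots> = (\<Prod>e\<in>G. measure_pmf.prob (bernoulli_pmf p) (Bs e))"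
    by (rule measure_Pi_pmf_Pi[OF fin])
  also have "\<dots> = (\<Prod>e\<in>G. if e \<in> A \<times> B then 1 - p else 1)"
    by (intro prod.cong refl) (auto simp: Bs_def measure_pmf_single pmf_bernoulli_False p)
  also have "\<dots> = (\<Prod>e\<in>A \<times> B. 1 - p)"
    using A B fin by (subst prod.If_cases) (auto simp: G_def intro!: arg_cong2[where f=power] arg_cong[where f=card])
  also have "\<dots> = (1 - p) ^ (card A * card B)"
    by (simp add: card_cartesian_product)
  finally show ?thesis .
qed

lemma finite_set_Gnnp: "finite (set_pmf (Gnnp n p))"
proof (rule finite_subset)
  show "set_pmf (Gnnp n p) \<subseteq> Pow ({..<n} \<times> {..<n})" by (auto simp: Gnnp_def)
qed simp

definition Pairs :: "nat \<Rightarrow> nat \<Rightarrow> (nat set \<times> nat set) set" where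
  "Pairs n t = {(A,B). A \<subseteq> {..<n} \<and> B \<subseteq> {..<n} \<and> A \<noteq> {} \<and> B \<noteq> {} \<and> card A + card B = t}"

definition mixed :: "nat \<Rightarrow> (nat \<times> nat) set \<Rightarrow> nat \<Rightarrow> (nat set \<times> nat set) set" where
  "mixed n Eg t = {x \<in> Pairs n t. \<forall>i\<in>fst x. \<forall>j\<in>snd x. (i,j) \<notin> Eg}"

lemma finite_Pairs: "finite (Pairs n t)"
  by (rule finite_subset[of _ "Pow {..<n} \<times> Pow {..<n}"]) (auto simp: Pairs_def)

lemma finite_mixed: "finite (mixed n Eg t)"
  using finite_Pairs by (simp add: mixed_def)

lemma finite_indep: "finite {S. indep_set n Eg S \<and> card S = t}"
  by (rule finite_subset[of _ "Pow (bip_vertices n)"]) (auto simp: indep_set_def bip_vertices_def)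

lemma num_indep_lower:
  assumes "1 \<le> t"
  shows "2 * (n choose t) \<le> num_indep n Eg t"
proof -
  define K where "K = {A. A \<subseteq> {..<n} \<and> card A = t}"
  have cK: "card K = n choose t" unfolding K_def using n_subsets[of "{..<n}" t] by simp
  have inj1: "inj_on (\<lambda>A. Inl ` A :: (nat+nat) set) K"
    by (intro inj_onI) (auto simp: inj_image_eq_iff)
  have inj2: "inj_on (\<lambda>A. Inr ` A :: (nat+nat) set) K"
    by (intro inj_onI) (auto simp: inj_image_eq_iff)
  have disj: "(\<lambda>A. Inl ` A :: (nat+nat) set) ` K \<inter> (\<lambda>A. Inr ` A) ` K = {}"
  proof (safe)
    fix A B assume "A \<in> K" "B \<in> K" and eq: "Inl ` A = (Inr ` B :: (nat+nat) set)"
    then have "A \<noteq> {}" using assms by (auto simp: K_def)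
    then obtain a where "a \<in> A" by auto
    then have "Inl a \<in> Inr ` B" using eq by blast
    then show "Inl ` A \<in> {}" by auto
  qed
  have sub: "(\<lambda>A. Inl ` A) ` K \<union> (\<lambda>A. Inr ` A) ` K \<subseteq> {S. indep_set n Eg S \<and> card S = t}"
    by (auto simp: K_def indep_set_def bip_vertices_def card_image)
  have "2 * (n choose t) = card ((\<lambda>A. Inl ` A :: (nat+nat) set) ` K \<union> (\<lambda>A. Inr ` A) ` K)"
  proof -
    have finK: "finite K" by (rule finite_subset[of _ "Pow {..<n}"]) (auto simp: K_def)
    show ?thesis
      by (subst card_Un_disjoint) (use finK disj inj1 inj2 cK in \<open>auto simp: card_image\<close>)
  qed
  also have "\<dots> \<le> num_indep n Eg t"
    unfolding num_indep_def by (rule card_mono[OF finite_indep sub])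
  finally show ?thesis .
qed

lemma num_indep_upper:
  assumes "1 \<le> t"
  shows "num_indep n Eg t \<le> 2 * (n choose t) + card (mixed n Eg t)"
proof -
  define K where "K = {A. A \<subseteq> {..<n} \<and> card A = t}"
  have cK: "card K = n choose t" unfolding K_def using n_subsets[of "{..<n}" t] by simp
  have finK: "finite K" by (rule finite_subset[of _ "Pow {..<n}"]) (auto simp: K_def)
  define h where "h = (\<lambda>(A,B). (Inl ` A \<union> Inr ` B :: (nat+nat) set))"
  define D where "D = (\<lambda>A. (A, {})) ` K \<union> (\<lambda>B. ({}, B)) ` K \<union> mixed n Eg t"
  have sub: "{S. indep_set n Eg S \<and> card S = t} \<subseteq> h ` D"
  proof
    fix S assume "S \<in> {S. indep_set n Eg S \<and> card S = t}"
    then have ind: "indep_set n Eg S" and cS: "t = card S" by auto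
    define A where "A = Inl -` S"
    define B where "B = Inr -` S"
    have Ssub: "S \<subseteq> bip_vertices n" using ind by (simp add: indep_set_def)
    have SAB: "S = Inl ` A \<union> Inr ` B"
    proof -
      have "x \<in> S \<longleftrightarrow> x \<in> Inl ` A \<union> Inr ` B" for x
        by (cases x) (auto simp: A_def B_def)
      then show ?thesis by blast
    qed
    have An: "A \<subseteq> {..<n}" "B \<subseteq> {..<n}" using Ssub by (auto simp: A_def B_def bip_vertices_def)
    then have fin: "finite A" "finite B" by (auto intro: finite_subset)
    have cAB: "card S = card A + card B"
      unfolding SAB by (subst card_Un_disjoint) (auto simp: fin card_image)
    have "(A, B) \<in> D"
    proof (cases "A = {}")
      case True
      then show ?thesis using An cAB cS by (auto simp: D_def K_def)
    next
      case False
      show ?thesis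
      proof (cases "B = {}")
        case True
        then show ?thesis using An cAB cS by (auto simp: D_def K_def)
      next
        case False2: False
        have "\<forall>i\<in>A. \<forall>j\<in>B. (i,j) \<notin> Eg" using ind by (auto simp: indep_set_def A_def B_def)
        then show ?thesis using An cAB cS False False2
          by (auto simp: D_def mixed_def Pairs_def)
      qed
    qed
    then show "S \<in> h ` D" using SAB unfolding h_def by force
  qed
  have "num_indep n Eg t \<le> card (h ` D)"
    unfolding num_indep_def by (rule card_mono[OF _ sub]) (auto simp: D_def finK finite_mixed)
  also have "\<dots> \<le> card D" by (rule card_image_le) (auto simp: D_def finK finite_mixed)
  also have "\<dots> \<le> card ((\<lambda>A. (A, {}::nat set)) ` K) + card ((\<lambda>B. ({}::nat set, B)) ` K) + card (mixed n Eg t)"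
    unfolding D_def by (rule order_trans[OF card_Un_le]) (rule add_right_mono, rule card_Un_le)
  also have "\<dots> \<le> 2 * (n choose t) + card (mixed n Eg t)"
    using card_image_le[OF finK, of "\<lambda>A. (A, {}::nat set)"] card_image_le[OF finK, of "\<lambda>B. ({}::nat set, B)"] cK by simp
  finally show ?thesis .
qed

lemma binom_step: "(n choose Suc k) * Suc k = (n choose k) * (n - k)"
  by (metis binomial_absorb_comp binomial_absorption mult.commute)

lemma binom_le_step: "k < n \<Longrightarrow> (n choose k) \<le> n * (n choose Suc k)"
proof -
  assume "k < n"
  have "(n choose k) \<le> (n choose k) * (n - k)" using \<open>k < n\<close> by simp
  also have "\<dots> = (n choose Suc k) * Suc k" by (rule binom_step[symmetric])
  also have "\<dots> \<le> (n choose Suc k) * n" using \<open>k < n\<close> by (intro mult_left_mono) auto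
  finally show ?thesis by (simp add: mult.commute)
qed

lemma binom_le_shift: "a + b \<le> n \<Longrightarrow> (n choose b) \<le> n ^ a * (n choose (a + b))"
proof (induction a)
  case 0 then show ?case by simp
next
  case (Suc a)
  have "(n choose b) \<le> n ^ a * (n choose (a + b))" using Suc by simp
  also have "\<dots> \<le> n ^ a * (n * (n choose Suc (a + b)))"
    using Suc.prems by (intro mult_left_mono binom_le_step) auto
  finally show ?case by (simp add: mult_ac)
qed

lemma binom_prod_le: "a + b \<le> n \<Longrightarrow> a \<le> b \<Longrightarrow> (n choose a) * (n choose b) \<le> n ^ (2 * a) * (n choose (a + b))"
proof -
  assume h: "a + b \<le> n" "a \<le> b"
  have "(n choose a) * (n choose b) \<le> n ^ a * (n ^ a * (n choose (a + b)))"
    using h by (intro mult_mono binomial_le_pow binom_le_shift) auto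
  then show ?thesis by (simp add: power_add mult_2 mult.assoc)
qed

lemma term_bound:
  fixes p Q :: real
  assumes p: "0 \<le> p" "p \<le> 1" and ab: "1 \<le> a" "1 \<le> b" "a + b = t" "t \<le> n"
    and Qdef: "Q = real n ^ 2 * exp (- p * real t / 2)" and Q1: "Q \<le> 1"
  shows "real (n choose a) * real (n choose b) * (1 - p) ^ (a * b) \<le> real (n choose t) * Q"
proof -
  define k where "k = min a b"
  have k1: "1 \<le> k" using ab by (simp add: k_def)
  have binom: "real (n choose a) * real (n choose b) \<le> real n ^ (2 * k) * real (n choose t)"
  proof (cases "a \<le> b")
    case True
    then have "(n choose a) * (n choose b) \<le> n ^ (2 * k) * (n choose t)"
      using binom_prod_le[of a b n] ab by (simp add: k_def)
    then show ?thesis by (metis of_nat_mono of_nat_mult of_nat_power)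
  next
    case False
    then have "(n choose b) * (n choose a) \<le> n ^ (2 * k) * (n choose t)"
      using binom_prod_le[of b a n] ab by (simp add: k_def add.commute)
    then show ?thesis by (metis of_nat_mono of_nat_mult of_nat_power mult.commute)
  qed
  have abk: "real k * real t / 2 \<le> real (a * b)"
  proof (cases "a \<le> b")
    case True
    then have "real t \<le> 2 * real b" using ab by simp
    then show ?thesis using True by (simp add: k_def) (metis mult_left_mono of_nat_0_le_iff mult.commute divide_right_mono order_refl [of 2] le_divide_eq_numeral1(1) mult.left_commute)
  next
    case False
    then have "real t \<le> 2 * real a" using ab by simp
    then show ?thesis using False by (simp add: k_def) (metis mult_left_mono of_nat_0_le_iff mult.commute divide_right_mono order_refl [of 2] le_divide_eq_numeral1(1) mult.left_commute)
  qed
  have "(1 - p) ^ (a * b) \<le> exp (- p) ^ (a * b)"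
    using p by (intro power_mono) (auto simp: exp_ge_add_one_self[of "-p", simplified] )
  also have "\<dots> = exp (- p * real (a * b))" by (simp add: exp_of_nat_mult[symmetric] mult.commute)
  also have "\<dots> \<le> exp (- p * (real k * real t / 2))"
    using mult_left_mono[OF abk p(1)] by simp
  also have "\<dots> = exp (- p * real t / 2) ^ k" by (simp add: exp_of_nat_mult[symmetric] field_simps)
  finally have ex: "(1 - p) ^ (a * b) \<le> exp (- p * real t / 2) ^ k" .
  have "real (n choose a) * real (n choose b) * (1 - p) ^ (a * b)
      \<le> real n ^ (2 * k) * real (n choose t) * exp (- p * real t / 2) ^ k"
    using p by (intro mult_mono binom ex) auto
  also have "\<dots> = real (n choose t) * Q ^ k" by (simp add: Qdef power_mult power_mult_distrib)
  also have "\<dots> \<le> real (n choose t) * Q"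
  proof -
    have "Q ^ k \<le> Q ^ 1" using Q1 k1 Qdef by (intro power_decreasing) auto
    then show ?thesis by (intro mult_left_mono) auto
  qed
  finally show ?thesis .
qed

definition Ks :: "nat \<Rightarrow> nat \<Rightarrow> nat set set" where
  "Ks n a = {A. A \<subseteq> {..<n} \<and> card A = a}"

lemma finite_Ks: "finite (Ks n a)"
  by (rule finite_subset[of _ "Pow {..<n}"]) (auto simp: Ks_def)

lemma card_Ks: "card (Ks n a) = n choose a"
  unfolding Ks_def using n_subsets[of "{..<n}" a] by simp

lemma Pairs_decomp: "Pairs n t = (\<Union>a\<in>{1..<t}. Ks n a \<times> Ks n (t - a))"
proof safe
  fix A B assume "(A, B) \<in> Pairs n t"
  then have h: "A \<subseteq> {..<n}" "B \<subseteq> {..<n}" "A \<noteq> {}" "B \<noteq> {}" "card A + card B = t"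
    by (auto simp: Pairs_def)
  then have "finite A" "finite B" by (auto intro: finite_subset)
  then have "card A \<ge> 1" "card B \<ge> 1" using h by (auto simp: Suc_le_eq card_gt_0_iff)
  then show "(A, B) \<in> (\<Union>a\<in>{1..<t}. Ks n a \<times> Ks n (t - a))"
    using h by (auto simp: Ks_def intro!: bexI[of _ "card A"])
next
  fix a A B assume "a \<in> {1..<t}" "A \<in> Ks n a" "B \<in> Ks n (t - a)"
  then show "(A, B) \<in> Pairs n t" by (auto simp: Ks_def Pairs_def)
qed

lemma sum_Pairs_bound:
  fixes p Q :: real
  assumes p: "0 \<le> p" "p \<le> 1" and tn: "t \<le> n"
    and Qdef: "Q = real n ^ 2 * exp (- p * real t / 2)" and Q1: "Q \<le> 1"
  shows "(\<Sum>x\<in>Pairs n t. (1 - p) ^ (card (fst x) * card (snd x))) \<le> real t * real (n choose t) * Q"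
proof -
  let ?f = "\<lambda>x::nat set \<times> nat set. (1 - p) ^ (card (fst x) * card (snd x))"
  have "(\<Sum>x\<in>Pairs n t. ?f x) = (\<Sum>a\<in>{1..<t}. \<Sum>x\<in>Ks n a \<times> Ks n (t - a). ?f x)"
    unfolding Pairs_decomp
    by (rule sum.UNION_disjoint) (auto simp: finite_Ks Ks_def)
  also have "\<dots> = (\<Sum>a\<in>{1..<t}. real (n choose a) * real (n choose (t - a)) * (1 - p) ^ (a * (t - a)))"
  proof (intro sum.cong refl)
    fix a assume "a \<in> {1..<t}"
    have "(\<Sum>x\<in>Ks n a \<times> Ks n (t - a). ?f x) = (\<Sum>x\<in>Ks n a \<times> Ks n (t - a). (1 - p) ^ (a * (t - a)))"
      by (intro sum.cong refl) (auto simp: Ks_def)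
    also have "\<dots> = real (n choose a) * real (n choose (t - a)) * (1 - p) ^ (a * (t - a))"
      by (simp add: card_cartesian_product card_Ks)
    finally show "(\<Sum>x\<in>Ks n a \<times> Ks n (t - a). ?f x) = \<dots>" .
  qed
  also have "\<dots> \<le> (\<Sum>a\<in>{1..<t}. real (n choose t) * Q)"
    by (intro sum_mono term_bound[OF p _ _ _ tn Qdef Q1]) auto
  also have "\<dots> \<le> real t * real (n choose t) * Q"
  proof -
    have "0 \<le> real (n choose t) * Q" using Qdef by simp
    then show ?thesis by (simp add: mult.assoc mult_right_mono)
  qed
  finally show ?thesis .
qed

lemma expectation_mixed:
  assumes p: "0 \<le> p" "p \<le> 1"
  shows "measure_pmf.expectation (Gnnp n p) (\<lambda>Eg. real (card (mixed n Eg t)))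
       = (\<Sum>x\<in>Pairs n t. (1 - p) ^ (card (fst x) * card (snd x)))"
proof -
  let ?S = "\<lambda>x::nat set \<times> nat set. {Eg. \<forall>i\<in>fst x. \<forall>j\<in>snd x. (i,j) \<notin> Eg}"
  have eq: "real (card (mixed n Eg t)) = (\<Sum>x\<in>Pairs n t. indicator (?S x) Eg)" for Eg
  proof -
    have "(\<Sum>x\<in>Pairs n t. indicator (?S x) Eg :: real) = (\<Sum>x\<in>mixed n Eg t. 1)"
      unfolding mixed_def by (simp add: sum.inter_filter[OF finite_Pairs] indicator_def finite_Pairs Int_def)
    then show ?thesis by simp
  qed
  have "measure_pmf.expectation (Gnnp n p) (\<lambda>Eg. real (card (mixed n Eg t)))
      = measure_pmf.expectation (Gnnp n p) (\<lambda>Eg. \<Sum>x\<in>Pairs n t. indicator (?S x) Eg)"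
    by (simp only: eq)
  also have "\<dots> = (\<Sum>x\<in>Pairs n t. measure_pmf.expectation (Gnnp n p) (indicator (?S x)))"
    by (rule Bochner_Integration.integral_sum) (simp add: integrable_measure_pmf_finite finite_set_Gnnp)
  also have "\<dots> = (\<Sum>x\<in>Pairs n t. (1 - p) ^ (card (fst x) * card (snd x)))"
  proof (intro sum.cong refl)
    fix x assume "x \<in> Pairs n t"
    then have "fst x \<subseteq> {..<n}" "snd x \<subseteq> {..<n}" by (auto simp: Pairs_def)
    then show "measure_pmf.expectation (Gnnp n p) (indicator (?S x)) = (1 - p) ^ (card (fst x) * card (snd x))"
      using prob_rect[OF _ _ p] by (simp add: Bochner_Integration.integral_indicator)
  qed
  finally show ?thesis .
qed

lemma binom_step_real: "k < n \<Longrightarrow> real (n choose Suc k) * (real k + 1) = real (n choose k) * (real n - real k)"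
proof -
  assume "k < n"
  have "real ((n choose Suc k) * Suc k) = real ((n choose k) * (n - k))" by (simp only: binom_step)
  then show ?thesis using \<open>k < n\<close> by (simp add: of_nat_diff algebra_simps)
qed

lemma L1:
  fixes x y s N :: real
  assumes "0 \<le> x" "0 \<le> y" "x * (s + 1) \<le> y * s" "1 \<le> s" "s \<le> N"
  shows "x * (2 + 1 / (2 * N)) \<le> 2 * y"
proof -
  have N: "N > 0" using assms by simp
  have "x * (2 + 1 / (2 * N)) * s = 2 * (x * s) + x * (s / (2 * N))" by (simp add: field_simps)
  also have "x * (s / (2 * N)) \<le> x * 1"
    using assms N by (intro mult_left_mono) (auto simp: field_simps)
  also have "2 * (x * s) + x * 1 \<le> 2 * (x * (s + 1))" using assms by (simp add: algebra_simps)
  also have "\<dots> \<le> 2 * y * s" using assms by simp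
  finally have "x * (2 + 1 / (2 * N)) * s \<le> (2 * y) * s" by simp
  then show ?thesis using assms by (simp add: mult_le_cancel_right)
qed

lemma poly_ineq:
  fixes K N :: real
  assumes "0 < K" "K < N" "1 \<le> K"
  shows "(2 + 1 / (2 * N))^2 * (K * (N - K)) \<le> 4 * ((K + 1) * (N - K + 1))"
proof -
  have N: "N > 0" using assms by simp
  have e: "(2 + 1 / (2 * N))^2 = 4 + 2 / N + 1 / (4 * N^2)" using N by (simp add: field_simps power2_eq_square)
  have a: "2 / N * (K * (N - K)) \<le> 2 * K"
  proof -
    have "K * (N - K) \<le> K * N" using assms by (simp add: mult_left_mono)
    then show ?thesis using N by (simp add: field_simps)
  qed
  have b: "1 / (4 * N^2) * (K * (N - K)) \<le> K"
  proof -
    have "K * (N - K) \<le> K * N" using assms by (simp add: mult_left_mono)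
    also have "K * N \<le> K * (4 * N^2)"
    proof -
      have "N * 1 \<le> N * (4 * N)" using assms by (intro mult_left_mono) auto
      then show ?thesis using assms by (intro mult_left_mono) (auto simp: power2_eq_square mult.assoc)
    qed
    finally show ?thesis using N by (simp add: field_simps)
  qed
  have "(2 + 1 / (2 * N))^2 * (K * (N - K)) = 4 * (K * (N - K)) + 2 / N * (K * (N - K)) + 1 / (4 * N^2) * (K * (N - K))"
    unfolding e by (simp add: algebra_simps)
  also have "\<dots> \<le> 4 * (K * (N - K)) + 2 * K + K" using a b by simp
  also have "\<dots> \<le> 4 * ((K + 1) * (N - K + 1))" using assms by (simp add: algebra_simps)
  finally show ?thesis .
qed

lemma L2:
  fixes u v w k N c :: real
  assumes "0 \<le> u" "0 \<le> v" "0 \<le> w" "0 < k" "k < N" "1 \<le> k"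
    and r1: "v * k = u * (N - k + 1)" and r2: "w * (k + 1) = v * (N - k)"
    and c: "c = 2 + 1 / (2 * N)"
  shows "c^2 * u * w \<le> 4 * v^2"
proof -
  have pos: "(N - k + 1) * (k + 1) > 0" using assms by simp
  have "c^2 * u * w * ((N - k + 1) * (k + 1)) = c^2 * ((u * (N - k + 1)) * (w * (k + 1)))" by (simp add: algebra_simps)
  also have "\<dots> = c^2 * (v * k) * (v * (N - k))" using r1 r2 by simp
  also have "\<dots> = v^2 * (c^2 * (k * (N - k)))" by (simp add: algebra_simps power2_eq_square)
  also have "\<dots> \<le> v^2 * (4 * ((k + 1) * (N - k + 1)))"
    using poly_ineq[of k N] assms by (intro mult_left_mono) auto
  also have "\<dots> = 4 * v^2 * ((N - k + 1) * (k + 1))" by (simp add: algebra_simps)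
  finally show ?thesis using pos by (simp add: mult_le_cancel_right)
qed

lemma deterministic:
  fixes Eg n m
  defines "a \<equiv> (\<lambda>t. real (num_indep n Eg t))"
  assumes n: "1 \<le> n" and m: "1 \<le> m"
    and small: "\<forall>t\<in>{m..n}. real (card (mixed n Eg t)) < real (n choose t) / (2 * real n)"
  shows "unimodal_range m n (n div 2) ((n + 1) div 2) a \<and> log_concave_range m n a"
proof -
  define c where "c = 2 + 1 / (2 * real n)"
  have lo: "2 * real (n choose t) \<le> a t" if "m \<le> t" for t
    unfolding a_def using num_indep_lower[of t n Eg] that m
    by (metis (mono_tags) le_trans of_nat_mono of_nat_mult of_nat_numeral)
  have hi: "a t \<le> c * real (n choose t)" if "m \<le> t" "t \<le> n" for t
  proof -
    have "a t \<le> real (2 * (n choose t) + card (mixed n Eg t))"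
      unfolding a_def using num_indep_upper[of t n Eg] that m by (intro of_nat_mono) auto
    also have "\<dots> \<le> 2 * real (n choose t) + real (n choose t) / (2 * real n)"
      using small that by (auto simp: less_imp_le)
    also have "\<dots> = c * real (n choose t)" by (simp add: c_def algebra_simps)
    finally show ?thesis .
  qed
  have inc: "a t \<le> a (Suc t)" if "m \<le> t" "t < n div 2" "t < n" for t
  proof -
    have "a t \<le> c * real (n choose t)" using hi that by auto
    also have "\<dots> \<le> 2 * real (n choose Suc t)"
    proof -
      have r: "real (n choose Suc t) * (real t + 1) = real (n choose t) * (real n - real t)"
        using binom_step_real that by auto
      have "real (n choose t) * (real (Suc t) + 1) \<le> real (n choose Suc t) * real (Suc t)"
      proof -
        have "real t + 2 \<le> real n - real t" using that by linarith
        then have "real (n choose t) * (real t + 2) \<le> real (n choose t) * (real n - real t)"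
          by (intro mult_left_mono) auto
        then show ?thesis using r by (simp add: algebra_simps)
      qed
      then show ?thesis unfolding c_def
        using L1[of "real (n choose t)" "real (n choose Suc t)" "real (Suc t)" "real n"] that
        by (simp add: mult.commute)
    qed
    also have "\<dots> \<le> a (Suc t)" using lo that by auto
    finally show ?thesis .
  qed
  have dec: "a (Suc t) \<le> a t" if "m \<le> t" "(n + 1) div 2 \<le> t" "t < n" for t
  proof -
    have "a (Suc t) \<le> c * real (n choose Suc t)" using hi that by auto
    also have "\<dots> \<le> 2 * real (n choose t)"
    proof -
      have r: "real (n choose Suc t) * (real t + 1) = real (n choose t) * (real n - real t)"
        using binom_step_real that by auto
      have "real (n choose t) * (real n - real t) \<le> real (n choose t) * real t"
        using that by (intro mult_left_mono) auto
      then have "real (n choose Suc t) * (real t + 1) \<le> real (n choose t) * real t" using r by simp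
      then show ?thesis unfolding c_def
        using L1[of "real (n choose Suc t)" "real (n choose t)" "real t" "real n"] that m
        by (simp add: mult.commute)
    qed
    also have "\<dots> \<le> a t" using lo that by auto
    finally show ?thesis .
  qed
  have lc: "a (k - 1) * a (k + 1) \<le> (a k)^2" if "m < k" "k < n" for k
  proof -
    obtain j where j: "k = Suc j" using \<open>m < k\<close> by (cases k) auto
    have aj: "0 \<le> a j" "a j \<le> c * real (n choose j)" using hi[of j] that j by (auto simp: a_def)
    have ak2: "0 \<le> a (k+1)" "a (k+1) \<le> c * real (n choose (k+1))" using hi[of "k+1"] that by (auto simp: a_def)
    have c0: "0 \<le> c" by (simp add: c_def)
    have "a (k - 1) * a (k + 1) \<le> (c * real (n choose j)) * (c * real (n choose (k+1)))"
      using aj ak2 j by (simp add: mult_mono)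
    also have "\<dots> = c^2 * real (n choose j) * real (n choose (k+1))" by (simp add: power2_eq_square)
    also have "\<dots> \<le> 4 * (real (n choose k))^2"
    proof (rule L2[where k = "real k" and N = "real n"])
      show "real (n choose k) * real k = real (n choose j) * (real n - real k + 1)"
        using binom_step_real[of j n] that j by (simp add: algebra_simps)
      show "real (n choose (k+1)) * (real k + 1) = real (n choose k) * (real n - real k)"
        using binom_step_real[of k n] that by simp
    qed (use that m c_def in auto)
    also have "\<dots> = (2 * real (n choose k))^2" by (simp add: power2_eq_square)
    also have "\<dots> \<le> (a k)^2" using lo[of k] that by (intro power_mono) auto
    finally show ?thesis .
  qed
  show ?thesis unfolding unimodal_range_def log_concave_range_def
    using inc dec lc by auto
qed

lemma bad_t_bound:
  fixes p Q :: real
  assumes p: "0 \<le> p" "p \<le> 1" and t: "1 \<le> t" "t \<le> n"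
    and Qdef: "Q = real n ^ 2 * exp (- p * real t / 2)" and Q1: "Q \<le> 1"
  shows "measure_pmf.prob (Gnnp n p) {Eg. real (n choose t) / (2 * real n) \<le> real (card (mixed n Eg t))}
         \<le> 2 * real n * real t * Q"
proof -
  have Cpos: "real (n choose t) > 0" using t by simp
  have npos: "real n > 0" using t by simp
  define c where "c = real (n choose t) / (2 * real n)"
  have cpos: "c > 0" using Cpos npos by (simp add: c_def)
  have "measure_pmf.prob (Gnnp n p) {Eg. c \<le> real (card (mixed n Eg t))}
      = measure (measure_pmf (Gnnp n p)) {x \<in> space (measure_pmf (Gnnp n p)). c \<le> real (card (mixed n x t))}"
    by simp
  also have "\<dots> \<le> measure_pmf.expectation (Gnnp n p) (\<lambda>Eg. real (card (mixed n Eg t))) / c"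
    by (rule integral_Markov_inequality_measure[where A = UNIV])
       (auto simp: integrable_measure_pmf_finite finite_set_Gnnp cpos)
  also have "\<dots> \<le> (real t * real (n choose t) * Q) / c"
    using cpos by (intro divide_right_mono) (auto simp: expectation_mixed[OF p] intro: sum_Pairs_bound[OF p t(2) Qdef Q1])
  also have "\<dots> = 2 * real n * real t * Q" using Cpos npos by (simp add: c_def field_simps)
  finally show ?thesis by (simp add: c_def)
qed

lemma asymp_part:
  fixes e :: real and p :: "nat \<Rightarrow> real"
  assumes e: "e > 0" and lim: "filterlim (\<lambda>n. p n / sqrt (ln (real n) / real n)) at_top sequentially"
  shows "eventually (\<lambda>n. 6 * ln (real n) \<le> p n * e * real n / 4) sequentially"
proof -
  have ev1: "eventually (\<lambda>n. 24 / e \<le> p n / sqrt (ln (real n) / real n)) sequentially"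
    using lim by (simp add: filterlim_at_top)
  have ev2: "eventually (\<lambda>n. (2::nat) \<le> n) sequentially" by (rule eventually_ge_at_top)
  show ?thesis using ev1 ev2
  proof eventually_elim
    case (elim n)
    have n2: "real n \<ge> 2" using elim by simp
    have lnpos: "ln (real n) > 0" using n2 by simp
    have spos: "sqrt (ln (real n) / real n) > 0" using lnpos n2 by simp
    have pn: "24 / e * sqrt (ln (real n) / real n) \<le> p n"
      using elim(1) spos by (simp add: pos_le_divide_eq)
    have lnle: "ln (real n) \<le> real n" using ln_le_minus_one[of "real n"] n2 by linarith
    have key: "ln (real n) \<le> sqrt (ln (real n) / real n) * real n"
    proof -
      have "sqrt (ln (real n) / real n) * real n = sqrt (ln (real n) / real n * (real n)^2)"
        using n2 by (subst real_sqrt_mult) simp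
      also have "\<dots> = sqrt (ln (real n) * real n)" using n2 by (simp add: power2_eq_square)
      also have "\<dots> \<ge> sqrt (ln (real n) * ln (real n))"
        using lnle lnpos by (intro real_sqrt_le_mono mult_left_mono) auto
      also have "sqrt (ln (real n) * ln (real n)) = ln (real n)" using lnpos by simp
      finally show ?thesis .
    qed
    have "6 * ln (real n) = 24 / e * ln (real n) * e / 4" using e by simp
    also have "\<dots> \<le> 24 / e * (sqrt (ln (real n) / real n) * real n) * e / 4"
      using key e by (intro divide_right_mono mult_right_mono mult_left_mono) auto
    also have "\<dots> = (24 / e * sqrt (ln (real n) / real n)) * e * real n / 4" by (simp add: algebra_simps)
    also have "\<dots> \<le> p n * e * real n / 4"
      using pn e n2 by (intro divide_right_mono mult_right_mono) auto
    finally show ?case .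
  qed
qed

theorem mainTheorem2:
  fixes \<epsilon> :: real and p :: "nat \<Rightarrow> real"
  assumes "\<epsilon> > 0"
    and "\<And>n. 0 \<le> p n \<and> p n \<le> 1"
    and "filterlim (\<lambda>n. p n / sqrt (ln (real n) / real n)) at_top sequentially"
  shows "(\<lambda>n. measure_pmf.prob (Gnnp n (p n))
            {Eg. let m = nat \<lfloor>\<epsilon> * real n\<rfloor>; a = (\<lambda>t. real (num_indep n Eg t)) in
                 unimodal_range m n (n div 2) ((n + 1) div 2) a \<and> log_concave_range m n a})
         \<longlonglongrightarrow> 1"
proof -
  note e = assms(1) and p = assms(2)
  define Good where "Good n = {Eg. let m = nat \<lfloor>\<epsilon> * real n\<rfloor>; a = (\<lambda>t. real (num_indep n Eg t)) in
                 unimodal_range m n (n div 2) ((n + 1) div 2) a \<and> log_concave_range m n a}" for n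
  define L where "L n = 1 - 2 * (real n + 1) / (real n)^2" for n :: nat
  have ev_asymp: "eventually (\<lambda>n. 6 * ln (real n) \<le> p n * \<epsilon> * real n / 4) sequentially"
    by (rule asymp_part[OF e assms(3)])
  have ev_n: "eventually (\<lambda>n. 2 \<le> n \<and> 2 \<le> \<epsilon> * real n) sequentially"
  proof -
    obtain N :: nat where N: "2 / \<epsilon> \<le> real N" using real_arch_simple[of "2 / \<epsilon>"] by auto
    show ?thesis
    proof (rule eventually_sequentiallyI[of "max 2 N"])
      fix n :: nat assume nN: "max 2 N \<le> n"
      have "real N \<le> real n" using nN by simp
      then have "2 / \<epsilon> \<le> real n" using N by linarith
      then have "2 \<le> real n * \<epsilon>" using e by (simp add: pos_divide_le_eq)
      then show "2 \<le> n \<and> 2 \<le> \<epsilon> * real n" using nN by (simp add: mult.commute)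
    qed
  qed
  have ev_low: "eventually (\<lambda>n. L n \<le> measure_pmf.prob (Gnnp n (p n)) (Good n)) sequentially"
    using ev_asymp ev_n
  proof eventually_elim
    case (elim n)
    have n2: "2 \<le> n" and en: "2 \<le> \<epsilon> * real n" using elim by auto
    have pn: "0 \<le> p n" "p n \<le> 1" using p by auto
    define m where "m = nat \<lfloor>\<epsilon> * real n\<rfloor>"
    have mreal: "\<epsilon> * real n / 2 \<le> real m"
    proof -
      have "\<epsilon> * real n - 1 < of_int \<lfloor>\<epsilon> * real n\<rfloor>" by linarith
      moreover have "real m = of_int \<lfloor>\<epsilon> * real n\<rfloor>" using en unfolding m_def by simp
      ultimately show ?thesis using en by linarith
    qed
    have m1: "1 \<le> m" using mreal en by simp
    define Qs where "Qs = real n ^ 2 * exp (- (p n * \<epsilon> * real n / 4))"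
    have Qs_le: "Qs \<le> 1 / (real n)^4"
    proof -
      have "exp (- (p n * \<epsilon> * real n / 4)) \<le> exp (- (6 * ln (real n)))" using elim by simp
      also have "exp (- (6 * ln (real n))) = 1 / (real n)^6"
      proof -
        have "exp (real 6 * ln (real n)) = exp (ln (real n)) ^ 6" by (rule exp_of_nat_mult)
        then have "exp (6 * ln (real n)) = (real n) ^ 6" using n2 by simp
        then show ?thesis by (simp add: exp_minus field_simps)
      qed
      finally have "Qs \<le> real n ^ 2 * (1 / (real n)^6)" unfolding Qs_def by (intro mult_left_mono) auto
      also have "\<dots> = 1 / (real n)^4" using n2 by (simp add: field_simps)
      finally show ?thesis .
    qed
    have Qs1: "Qs \<le> 1"
    proof -
      have "1 / (real n)^4 \<le> 1" using n2 by simp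
      then show ?thesis using Qs_le by linarith
    qed
    define Bad where "Bad t = {Eg. real (n choose t) / (2 * real n) \<le> real (card (mixed n Eg t))}" for t
    have badp: "measure_pmf.prob (Gnnp n (p n)) (Bad t) \<le> 2 * real n * real n * Qs" if t: "t \<in> {m..n}" for t
    proof -
      define Q where "Q = real n ^ 2 * exp (- p n * real t / 2)"
      have tm: "\<epsilon> * real n / 2 \<le> real t" using mreal t by auto
      have QQs: "Q \<le> Qs" unfolding Q_def Qs_def
      proof (intro mult_left_mono)
        have "p n * (\<epsilon> * real n / 2) \<le> p n * real t" using tm pn by (intro mult_left_mono) auto
        then show "exp (- p n * real t / 2) \<le> exp (- (p n * \<epsilon> * real n / 4))" by (simp add: mult_ac)
      qed simp
      have "measure_pmf.prob (Gnnp n (p n)) (Bad t) \<le> 2 * real n * real t * Q"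
        unfolding Bad_def using t m1 QQs Qs1 by (intro bad_t_bound[OF pn _ _ Q_def]) auto
      also have "\<dots> \<le> 2 * real n * real n * Qs"
        using t QQs by (intro mult_mono) (auto simp: Q_def)
      finally show ?thesis .
    qed
    have sub: "UNIV - (\<Union>t\<in>{m..n}. Bad t) \<subseteq> Good n"
    proof
      fix Eg assume "Eg \<in> UNIV - (\<Union>t\<in>{m..n}. Bad t)"
      then have "\<forall>t\<in>{m..n}. real (card (mixed n Eg t)) < real (n choose t) / (2 * real n)"
        by (auto simp: Bad_def not_le)
      from deterministic[OF _ m1 this] n2 show "Eg \<in> Good n"
        by (simp add: Good_def m_def Let_def)
    qed
    have "measure_pmf.prob (Gnnp n (p n)) (\<Union>t\<in>{m..n}. Bad t) \<le> (\<Sum>t\<in>{m..n}. measure_pmf.prob (Gnnp n (p n)) (Bad t))"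
      by (rule measure_pmf.finite_measure_subadditive_finite) auto
    also have "\<dots> \<le> (\<Sum>t\<in>{m..n}. 2 * real n * real n * Qs)" by (intro sum_mono badp)
    also have "\<dots> = real (card {m..n}) * (2 * real n * real n * Qs)" by simp
    also have "\<dots> \<le> (real n + 1) * (2 * real n * real n * Qs)"
    proof (intro mult_right_mono)
      have "card {m..n} \<le> n + 1" by simp
      then show "real (card {m..n}) \<le> real n + 1" by (metis of_nat_Suc of_nat_le_iff Suc_eq_plus1 add.commute)
    qed (auto simp: Qs_def)
    also have "\<dots> \<le> (real n + 1) * (2 * real n * real n * (1 / (real n)^4))"
      using Qs_le by (intro mult_left_mono) auto
    also have "\<dots> = 2 * (real n + 1) / (real n)^2" using n2 by (simp add: field_simps power2_eq_square power4_eq_xxxx)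
    finally have U: "measure_pmf.prob (Gnnp n (p n)) (\<Union>t\<in>{m..n}. Bad t) \<le> 2 * (real n + 1) / (real n)^2" .
    have "L n = 1 - 2 * (real n + 1) / (real n)^2" by (simp add: L_def)
    also have "\<dots> \<le> 1 - measure_pmf.prob (Gnnp n (p n)) (\<Union>t\<in>{m..n}. Bad t)" using U by simp
    also have "\<dots> = measure_pmf.prob (Gnnp n (p n)) (UNIV - (\<Union>t\<in>{m..n}. Bad t))"
      using measure_pmf.prob_compl[of "\<Union>t\<in>{m..n}. Bad t" "Gnnp n (p n)"] by simp
    also have "\<dots> \<le> measure_pmf.prob (Gnnp n (p n)) (Good n)"
      by (rule measure_pmf.finite_measure_mono[OF sub]) simp
    finally show ?case .
  qed
  have ev_up: "eventually (\<lambda>n. measure_pmf.prob (Gnnp n (p n)) (Good n) \<le> 1) sequentially"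
    by (simp add: measure_pmf.prob_le_1)
  have limL: "L \<longlonglongrightarrow> 1" unfolding L_def by real_asymp
  have "(\<lambda>n. measure_pmf.prob (Gnnp n (p n)) (Good n)) \<longlonglongrightarrow> 1"
    by (rule tendsto_sandwich[OF ev_low ev_up limL tendsto_const])
  then show ?thesis by (simp add: Good_def)
qed

end
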